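(* Let $\nu\in\mathbb{N}$ and $0<x\le1$. Then $1\le D_{\nu,x}<\infty$.
   Context: $|\cdot|$ is the maximum norm on $\mathbb{Z}^\nu$. $D_{\nu,x}:=\sup_{n\in\mathbb{Z}^\nu,\sigma\ge1/4}\sum_{m\in\mathbb{Z}^\nu}\frac{e^{\sigma|n|^x}}{e^{\sigma|m|^x}e^{\sigma|n-m|^x}}$ if $0<x<1$, and $D_{\nu,1}:=\sup_{n\in\mathbb{Z}^\nu,\sigma\ge1/4}\sum_{m\in\mathbb{Z}^\nu}\frac{(1+|n|)^{\nu+1}e^{\sigma|n|}}{(1+|m|)^{\nu+1}e^{\sigma|m|}(1+|n-m|)^{\nu+1}e^{\sigma|n-m|}}$. *)

theory Defs
  imports "HOL-Analysis.Analysis"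
begin

text \<open>The lattice Z^nu, represented as integer sequences vanishing outside the
  index range {0..<nu}.\<close>
definition lattice :: "nat \<Rightarrow> (nat \<Rightarrow> int) set" where
  "lattice \<nu> = {n. \<forall>i\<ge>\<nu>. n i = 0}"

definition mnorm :: "nat \<Rightarrow> (nat \<Rightarrow> int) \<Rightarrow> real" where
  "mnorm \<nu> n = Max (insert 0 ((\<lambda>i. real_of_int \<bar>n i\<bar>) ` {..<\<nu>}))"

definition wt :: "nat \<Rightarrow> real \<Rightarrow> real \<Rightarrow> (nat \<Rightarrow> int) \<Rightarrow> real" where
  "wt \<nu> x \<sigma> n =
     (if x < 1 then exp (\<sigma> * (mnorm \<nu> n) powr x)
      else (1 + mnorm \<nu> n) ^ (\<nu> + 1) * exp (\<sigma> * mnorm \<nu> n))"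

definition Dconst :: "nat \<Rightarrow> real \<Rightarrow> ennreal" where
  "Dconst \<nu> x = (SUP n \<in> lattice \<nu>. SUP \<sigma> \<in> {1/4..}.
      infsum (\<lambda>m. ennreal (wt \<nu> x \<sigma> n / (wt \<nu> x \<sigma> m * wt \<nu> x \<sigma> (\<lambda>i. n i - m i))))
             (lattice \<nu>))"

end

theory Submission
  imports Defs
begin

lemma expbound:
  fixes c x t :: real and N :: nat
  assumes c: "c > 0" and x: "x > 0" and t: "t \<ge> 0"
  shows "(1+t)^N \<le> 2^N * max 1 ((real (nat \<lceil>N/x\<rceil> + 1) / c) ^ (nat \<lceil>N/x\<rceil> + 1)) * exp (c * t powr x)"
proof -
  define k where "k = nat \<lceil>N/x\<rceil> + 1"
  have k0: "k > 0" by (simp add: k_def)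
  have kx: "real k * x \<ge> N"
  proof -
    have "real k \<ge> N/x" unfolding k_def by linarith
    thus ?thesis using x by (simp add: field_simps)
  qed
  define B where "B = max 1 ((real k / c) ^ k)"
  have e1: "exp (c * t powr x) \<ge> 1" using c t by simp
  show ?thesis
  proof (cases "t \<le> 1")
    case True
    have "(1+t)^N \<le> 2^N" using t True by (intro power_mono) auto
    also have "\<dots> \<le> 2^N * B * exp (c * t powr x)"
    proof -
      have "1 \<le> B" by (simp add: B_def)
      hence "1 \<le> B * exp (c * t powr x)" using e1 by (metis mult_mono' mult_1 zero_le_one)
      thus ?thesis by (simp add: mult.assoc)
    qed
    finally show ?thesis by (simp add: B_def k_def)
  next
    case False
    have "(1+t)^N \<le> (2*t)^N" using False t by (intro power_mono) auto
    also have "\<dots> = 2^N * t^N" by (simp add: power_mult_distrib)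
    also have "t^N = t powr N" using False by (simp add: powr_realpow)
    also have "\<dots> \<le> t powr (k*x)" using False kx by (intro powr_mono) auto
    also have "\<dots> = (t powr x) ^ k" using False by (simp add: powr_powr [symmetric] powr_realpow [symmetric] mult.commute)
    also have "\<dots> = (real k / c)^k * ((c * t powr x) / k) ^ k"
      using c k0 by (simp add: power_mult_distrib [symmetric])
    also have "\<dots> \<le> (real k / c)^k * exp (c * t powr x)"
    proof (rule mult_left_mono)
      have "((c * t powr x) / k) ^ k \<le> exp ((c * t powr x) / k) ^ k"
        using c t by (intro power_mono) (auto intro: order_trans[OF _ exp_ge_add_one_self])
      also have "exp ((c * t powr x) / k) ^ k = exp (c * t powr x)"
        using k0 by (simp add: exp_of_nat_mult [symmetric])
      finally show "((c * t powr x) / k) ^ k \<le> exp (c * t powr x)" .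
    qed (use c in auto)
    finally have "(1+t)^N \<le> 2^N * ((real k / c)^k * exp (c * t powr x))"
      by (simp add: mult_left_mono)
    also have "\<dots> \<le> 2^N * (B * exp (c * t powr x))"
      by (intro mult_left_mono) (auto simp: B_def)
    finally show ?thesis by (simp add: B_def k_def mult.assoc)
  qed
qed

lemma mnorm_nonneg: "mnorm \<nu> m \<ge> 0"
  unfolding mnorm_def by (simp add: Max_ge_iff)

lemma mnorm_ge: "i < \<nu> \<Longrightarrow> real_of_int \<bar>m i\<bar> \<le> mnorm \<nu> m"
  unfolding mnorm_def by (simp add: Max_ge_iff)

lemma mnorm_triangle: "mnorm \<nu> n \<le> mnorm \<nu> m + mnorm \<nu> (\<lambda>i. n i - m i)"
proof -
  have "real_of_int \<bar>n i\<bar> \<le> mnorm \<nu> m + mnorm \<nu> (\<lambda>i. n i - m i)" if "i < \<nu>" for i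
  proof -
    have "real_of_int \<bar>n i\<bar> \<le> real_of_int \<bar>m i\<bar> + real_of_int \<bar>n i - m i\<bar>" by linarith
    also have "\<dots> \<le> mnorm \<nu> m + mnorm \<nu> (\<lambda>i. n i - m i)"
      using mnorm_ge[OF that, of m] mnorm_ge[OF that, of "\<lambda>i. n i - m i"] by simp
    finally show ?thesis .
  qed
  thus ?thesis unfolding mnorm_def[of _ n]
    using mnorm_nonneg[of \<nu> m] mnorm_nonneg[of \<nu> "\<lambda>i. n i - m i"] by (auto simp: Max_le_iff)
qed

lemma mnorm_zero: "mnorm \<nu> (\<lambda>i. 0) = 0"
  unfolding mnorm_def by (auto intro!: Max_eqI)

lemma finite_sum_bound:
  fixes h :: "int \<Rightarrow> real"
  assumes h0: "\<And>k. h k \<ge> 0" and hT: "\<And>K. (\<Sum>k\<in>{-K..K}. h k) \<le> T"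
  assumes F: "finite F" "F \<subseteq> lattice \<nu>"
  shows "(\<Sum>m\<in>F. \<Prod>i<\<nu>. h (m i)) \<le> T ^ \<nu>"
proof -
  define K where "K = \<lceil>Max (insert 0 (mnorm \<nu> ` F))\<rceil>"
  have K: "\<bar>m i\<bar> \<le> K" if "m \<in> F" "i < \<nu>" for m i
  proof -
    have "real_of_int \<bar>m i\<bar> \<le> mnorm \<nu> m" by (rule mnorm_ge[OF that(2)])
    also have "\<dots> \<le> Max (insert 0 (mnorm \<nu> ` F))" using F that by (auto intro: Max_ge)
    finally show ?thesis unfolding K_def by linarith
  qed
  define P where "P = PiE {..<\<nu>} (\<lambda>_. {-K..K})"
  define E where "E g = (\<lambda>i. if i < \<nu> then g i else (0::int))" for g :: "nat \<Rightarrow> int"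
  have finP: "finite P" unfolding P_def by (simp add: finite_PiE)
  have FE: "F \<subseteq> E ` P"
  proof
    fix m assume m: "m \<in> F"
    have "m = E (restrict m {..<\<nu>})"
      using F m unfolding E_def lattice_def by (auto simp: fun_eq_iff)
    moreover have "restrict m {..<\<nu>} \<in> P" unfolding P_def using K[OF m] by (force simp: abs_le_iff)
    ultimately show "m \<in> E ` P" by blast
  qed
  have injE: "inj_on E P"
  proof
    fix g g' assume "g \<in> P" "g' \<in> P" "E g = E g'"
    thus "g = g'" unfolding P_def E_def by (auto simp: fun_eq_iff PiE_def extensional_def) metis
  qed
  have "(\<Sum>m\<in>F. \<Prod>i<\<nu>. h (m i)) \<le> (\<Sum>m\<in>E ` P. \<Prod>i<\<nu>. h (m i))"
    using FE finP h0 by (intro sum_mono2) (auto intro: prod_nonneg)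
  also have "\<dots> = (\<Sum>g\<in>P. \<Prod>i<\<nu>. h (E g i))"
    using injE by (simp add: sum.reindex)
  also have "\<dots> = (\<Sum>g\<in>P. \<Prod>i<\<nu>. h (g i))"
    unfolding E_def by (intro sum.cong refl prod.cong) auto
  also have "\<dots> = (\<Prod>i<\<nu>. \<Sum>k\<in>{-K..K}. h k)"
    unfolding P_def by (rule prod_sum_PiE [symmetric]) auto
  also have "\<dots> \<le> (\<Prod>i<\<nu>. T)"
    using h0 hT by (intro prod_mono) (auto intro: sum_nonneg)
  finally show ?thesis by simp
qed

lemma lattice_sum_bound:
  fixes h :: "int \<Rightarrow> real"
  assumes h0: "\<And>k. h k \<ge> 0" and hT: "\<And>K. (\<Sum>k\<in>{-K..K}. h k) \<le> T"
  shows "infsum (\<lambda>m. ennreal (\<Prod>i<\<nu>. h (m i))) (lattice \<nu>) \<le> ennreal (T ^ \<nu>)"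
proof (rule infsum_le_finite_sums)
  fix F assume "finite F" "F \<subseteq> lattice \<nu>"
  have "(\<Sum>m\<in>F. ennreal (\<Prod>i<\<nu>. h (m i))) = ennreal (\<Sum>m\<in>F. \<Prod>i<\<nu>. h (m i))"
    using h0 by (intro sum_ennreal) (auto intro: prod_nonneg)
  also have "\<dots> \<le> ennreal (T ^ \<nu>)"
    using finite_sum_bound[OF assms \<open>finite F\<close> \<open>F \<subseteq> lattice \<nu>\<close>] by (rule ennreal_leI)
  finally show "(\<Sum>m\<in>F. ennreal (\<Prod>i<\<nu>. h (m i))) \<le> ennreal (T ^ \<nu>)" .
qed (rule nonneg_summable_on_complete, simp)

lemma oned_bound:
  fixes p :: real assumes p: "p > 1"
  defines "S \<equiv> (\<Sum>j. real (Suc j) powr (-p))"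
  shows "(\<Sum>k\<in>{-K..K}. (1 + real_of_int \<bar>k\<bar>) powr (-p)) \<le> 2 * S"
proof -
  define f where "f j = real (Suc j) powr (-p)" for j
  have sf: "summable f"
    unfolding f_def using summable_Suc_iff[of "\<lambda>n. real n powr (-p)"] summable_real_powr_iff[of "-p"] p
    by simp
  define A where "A = int ` {..<Suc (nat K)}"
  define B where "B = (\<lambda>j. - int j) ` {..<Suc (nat K)}"
  let ?h = "\<lambda>k::int. (1 + real_of_int \<bar>k\<bar>) powr (-p)"
  have sub: "{-K..K} \<subseteq> A \<union> B"
  proof
    fix k assume k: "k \<in> {-K..K}"
    show "k \<in> A \<union> B"
    proof (cases "k \<ge> 0")
      case True
      hence "k = int (nat k)" "nat k < Suc (nat K)" using k by auto
      thus ?thesis unfolding A_def by blast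
    next
      case False
      hence "k = - int (nat (-k))" "nat (-k) < Suc (nat K)" using k by auto
      thus ?thesis unfolding B_def by blast
    qed
  qed
  have "(\<Sum>k\<in>{-K..K}. ?h k) \<le> (\<Sum>k\<in>A \<union> B. ?h k)"
    using sub by (intro sum_mono2) (auto simp: A_def B_def)
  also have "\<dots> \<le> (\<Sum>k\<in>A. ?h k) + (\<Sum>k\<in>B. ?h k)"
    by (subst sum_Un) (auto simp: A_def B_def intro!: sum_nonneg)
  also have "(\<Sum>k\<in>A. ?h k) = (\<Sum>j<Suc (nat K). f j)"
    unfolding A_def f_def by (subst sum.reindex) (auto simp: inj_on_def add.commute)
  also have "(\<Sum>k\<in>B. ?h k) = (\<Sum>j<Suc (nat K). f j)"
    unfolding B_def f_def by (subst sum.reindex) (auto simp: inj_on_def add.commute)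
  also have "(\<Sum>j<Suc (nat K). f j) \<le> S"
    unfolding S_def f_def[symmetric] using sf by (intro sum_le_suminf) (auto simp: f_def[abs_def] add.commute)
  finally show ?thesis by simp
qed

lemma keyineq:
  fixes x u v :: real
  assumes x: "0 < x" "x < 1" and u: "0 \<le> u" "u \<le> v"
  shows "(u+v) powr x \<le> v powr x + x * u powr x"
proof (cases "u = 0")
  case True thus ?thesis by simp
next
  case False
  hence up: "u > 0" using u by simp
  hence vp: "v > 0" using u by simp
  have "(u + v) powr x * v powr (1 - x) \<le> x * (u + v) + (1 - x) * v"
    using Youngs_inequality_0[of x "1-x" "u+v" v] x up vp by simp
  hence "(u + v) powr x \<le> (x * (u + v) + (1 - x) * v) / v powr (1 - x)"
    using vp by (simp add: field_simps)
  also have "\<dots> = v powr x + x * u * v powr (x - 1)"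
    using vp by (simp add: field_simps powr_diff powr_add)
  also have "v powr (x-1) \<le> u powr (x-1)"
    using x up u by (intro powr_mono2') auto
  hence "x * u * v powr (x - 1) \<le> x * u * u powr (x-1)"
    using x up by (intro mult_left_mono) auto
  also have "x * u * u powr (x-1) = x * u powr x"
    using up by (simp add: powr_diff field_simps)
  finally show ?thesis by simp
qed

lemma q_le_G:
  assumes nu: "\<nu> \<ge> 1"
  shows "1 / (1 + mnorm \<nu> m) ^ (\<nu>+1) \<le> (\<Prod>i<\<nu>. (1 + real_of_int \<bar>m i\<bar>) powr (- (real (\<nu>+1) / real \<nu>)))"
proof -
  define M where "M = 1 + mnorm \<nu> m"
  have M: "M \<ge> 1" using mnorm_nonneg[of \<nu> m] by (simp add: M_def)
  have "M powr (real (\<nu>+1)) = M ^ (\<nu>+1)" using M by (subst powr_realpow) auto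
  hence "1 / M ^ (\<nu>+1) = M powr (- real (\<nu>+1))"
    by (simp only: powr_minus inverse_eq_divide)
  also have "\<dots> = (M powr (- (real (\<nu>+1) / real \<nu>))) ^ \<nu>"
    using M nu by (simp add: powr_realpow [symmetric] powr_powr)
  also have "\<dots> = (\<Prod>i<\<nu>. M powr (- (real (\<nu>+1) / real \<nu>)))" by simp
  also have "\<dots> \<le> (\<Prod>i<\<nu>. (1 + real_of_int \<bar>m i\<bar>) powr (- (real (\<nu>+1) / real \<nu>)))"
  proof (intro prod_mono conjI)
    fix i assume "i \<in> {..<\<nu>}"
    hence "1 + real_of_int \<bar>m i\<bar> \<le> M" using mnorm_ge[of i \<nu> m] by (simp add: M_def)
    thus "M powr (- (real (\<nu>+1) / real \<nu>)) \<le> (1 + real_of_int \<bar>m i\<bar>) powr (- (real (\<nu>+1) / real \<nu>))"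
      using nu by (intro powr_mono2') auto
  qed simp
  finally show ?thesis by (simp add: M_def add_ac)
qed

lemma ratio_lt1:
  fixes x \<sigma> u v w c B :: real and N :: nat
  assumes x: "0 < x" "x < 1" and \<sigma>: "\<sigma> \<ge> 1/4" and uv: "0 \<le> u" "0 \<le> v" "0 \<le> w" "w \<le> u + v"
  assumes cdef: "c = (1 - x) / 4"
  assumes EB: "\<And>t. t \<ge> 0 \<Longrightarrow> (1+t)^N \<le> B * exp (c * t powr x)"
  shows "exp (\<sigma> * w powr x) / (exp (\<sigma> * u powr x) * exp (\<sigma> * v powr x))
         \<le> B * (1 / (1+u)^N + 1 / (1+v)^N)"
proof -
  have gen: "exp (\<sigma> * w powr x) / (exp (\<sigma> * a powr x) * exp (\<sigma> * b powr x)) \<le> B / (1+a)^N"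
    if ab: "0 \<le> a" "a \<le> b" "w \<le> a + b" for a b
  proof -
    have "w powr x \<le> (a + b) powr x" using ab uv x by (intro powr_mono2) auto
    also have "\<dots> \<le> b powr x + x * a powr x" using keyineq[OF x ab(1,2)] .
    finally have "w powr x - a powr x - b powr x \<le> - ((1 - x) * a powr x)"
      by (simp add: algebra_simps)
    moreover have "(1 - x) * a powr x \<ge> 0" using x by simp
    ultimately have y0: "w powr x - a powr x - b powr x \<le> 0" by linarith
    have "(\<sigma> - 1/4) * (w powr x - a powr x - b powr x) \<le> 0"
      using \<sigma> y0 by (intro mult_nonneg_nonpos) auto
    hence "\<sigma> * (w powr x - a powr x - b powr x) \<le> (w powr x - a powr x - b powr x) / 4"
      by (simp add: algebra_simps)
    also have "\<dots> \<le> - (c * a powr x)"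
      using \<open>w powr x - a powr x - b powr x \<le> - ((1 - x) * a powr x)\<close> unfolding cdef by simp
    finally have "\<sigma> * (w powr x - a powr x - b powr x) \<le> - (c * a powr x)" .
    hence "exp (\<sigma> * w powr x) / (exp (\<sigma> * a powr x) * exp (\<sigma> * b powr x)) \<le> exp (- (c * a powr x))"
      by (simp add: exp_diff [symmetric] algebra_simps flip: exp_add)
    also have "\<dots> = 1 / exp (c * a powr x)" by (simp add: exp_minus field_simps)
    also have "\<dots> \<le> B / (1+a)^N"
      using EB[OF ab(1)] ab by (simp add: field_simps)
    finally show ?thesis .
  qed
  have Bnn: "B \<ge> 0" using EB[of 0] by (smt (verit) exp_gt_zero zero_less_mult_iff power_one)
  show ?thesis
  proof (cases "u \<le> v")
    case True
    have "exp (\<sigma> * w powr x) / (exp (\<sigma> * u powr x) * exp (\<sigma> * v powr x)) \<le> B / (1+u)^N"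
      using gen[of u v] True uv by simp
    also have "\<dots> \<le> B * (1 / (1+u)^N + 1 / (1+v)^N)" using Bnn uv by (simp add: field_simps)
    finally show ?thesis .
  next
    case False
    have "exp (\<sigma> * w powr x) / (exp (\<sigma> * u powr x) * exp (\<sigma> * v powr x)) \<le> B / (1+v)^N"
      using gen[of v u] False uv by (simp add: mult.commute add.commute)
    also have "\<dots> \<le> B * (1 / (1+u)^N + 1 / (1+v)^N)" using Bnn uv by (simp add: field_simps)
    finally show ?thesis .
  qed
qed

lemma ratio_eq1:
  fixes \<sigma> u v w :: real and N :: nat
  assumes \<sigma>: "\<sigma> \<ge> 0" and uv: "0 \<le> u" "0 \<le> v" "0 \<le> w" "w \<le> u + v"
  shows "(1+w)^N * exp (\<sigma> * w) / ((1+u)^N * exp (\<sigma> * u) * ((1+v)^N * exp (\<sigma> * v)))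
         \<le> 2^N * (1 / (1+u)^N + 1 / (1+v)^N)"
proof -
  have e: "exp (\<sigma> * w) \<le> exp (\<sigma> * u) * exp (\<sigma> * v)"
    using \<sigma> uv by (simp add: mult_left_mono flip: exp_add distrib_left)
  have "(1+w)^N * exp (\<sigma> * w) / ((1+u)^N * exp (\<sigma> * u) * ((1+v)^N * exp (\<sigma> * v)))
        = ((1+w)^N / ((1+u)^N * (1+v)^N)) * (exp (\<sigma> * w) / (exp (\<sigma> * u) * exp (\<sigma> * v)))"
    by (simp add: field_simps)
  also have "\<dots> \<le> ((1+w)^N / ((1+u)^N * (1+v)^N)) * 1"
    using e uv by (intro mult_left_mono) (auto simp: divide_le_eq_1)
  also have "(1+w)^N / ((1+u)^N * (1+v)^N) \<le> 2^N * (1 / (1+u)^N + 1 / (1+v)^N)"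
  proof (cases "u \<le> v")
    case True
    have "(1+w)^N \<le> (2*(1+v))^N" using uv True by (intro power_mono) auto
    hence "(1+w)^N / ((1+u)^N * (1+v)^N) \<le> (2*(1+v))^N / ((1+u)^N * (1+v)^N)"
      using uv by (intro divide_right_mono) auto
    also have "\<dots> = 2^N / (1+u)^N"
    proof -
      have nz: "(1+v)^N \<noteq> 0" using uv by simp
      show ?thesis by (simp only: power_mult_distrib mult_divide_mult_cancel_right[OF nz])
    qed
    also have "\<dots> \<le> 2^N * (1 / (1+u)^N + 1 / (1+v)^N)" using uv by (simp add: field_simps)
    finally show ?thesis .
  next
    case False
    have "(1+w)^N \<le> (2*(1+u))^N" using uv False by (intro power_mono) auto
    hence "(1+w)^N / ((1+u)^N * (1+v)^N) \<le> (2*(1+u))^N / ((1+u)^N * (1+v)^N)"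
      using uv by (intro divide_right_mono) auto
    also have "\<dots> = 2^N / (1+v)^N"
    proof -
      have nz: "(1+u)^N \<noteq> 0" using uv by simp
      show ?thesis by (simp only: power_mult_distrib mult.commute[of "(1+u)^N"] mult_divide_mult_cancel_right[OF nz])
    qed
    also have "\<dots> \<le> 2^N * (1 / (1+u)^N + 1 / (1+v)^N)" using uv by (simp add: field_simps)
    finally show ?thesis .
  qed
  finally show ?thesis by simp
qed


lemma ennreal_infsum_cmult_le:
  fixes f :: "'a \<Rightarrow> ennreal"
  shows "infsum (\<lambda>m. c * f m) A \<le> c * infsum f A"
proof (rule infsum_le_finite_sums)
  fix F assume F: "finite F" "F \<subseteq> A"
  have "sum f F \<le> infsum f A"
    unfolding nonneg_infsum_complete[of A f, OF zero_le] using F by (intro SUP_upper) auto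
  hence "c * sum f F \<le> c * infsum f A" by (rule mult_left_mono) simp
  thus "(\<Sum>m\<in>F. c * f m) \<le> c * infsum f A" by (simp add: sum_distrib_left)
qed (rule nonneg_summable_on_complete, simp)

lemma term_bound:
  fixes \<nu> :: nat and x \<sigma> :: real
  assumes nu: "\<nu> \<ge> 1" and x: "0 < x" "x \<le> 1" and \<sigma>: "\<sigma> \<ge> 1/4"
  defines "C \<equiv> (if x < 1 then 2^(\<nu>+1) * max 1 ((real (nat \<lceil>(\<nu>+1)/x\<rceil> + 1) / ((1-x)/4)) ^ (nat \<lceil>(\<nu>+1)/x\<rceil> + 1)) else 2^(\<nu>+1))"
  shows "wt \<nu> x \<sigma> n / (wt \<nu> x \<sigma> m * wt \<nu> x \<sigma> (\<lambda>i. n i - m i))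
         \<le> C * ((\<Prod>i<\<nu>. (1 + real_of_int \<bar>m i\<bar>) powr (- (real (\<nu>+1) / real \<nu>)))
               + (\<Prod>i<\<nu>. (1 + real_of_int \<bar>n i - m i\<bar>) powr (- (real (\<nu>+1) / real \<nu>))))"
proof -
  define u where "u = mnorm \<nu> m"
  define v where "v = mnorm \<nu> (\<lambda>i. n i - m i)"
  define w where "w = mnorm \<nu> n"
  have uv: "0 \<le> u" "0 \<le> v" "0 \<le> w" "w \<le> u + v"
    unfolding u_def v_def w_def using mnorm_nonneg mnorm_triangle by auto
  have C0: "C \<ge> 0" unfolding C_def by auto
  have "wt \<nu> x \<sigma> n / (wt \<nu> x \<sigma> m * wt \<nu> x \<sigma> (\<lambda>i. n i - m i))
        \<le> C * (1 / (1+u)^(\<nu>+1) + 1 / (1+v)^(\<nu>+1))"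
  proof (cases "x < 1")
    case True
    have "exp (\<sigma> * w powr x) / (exp (\<sigma> * u powr x) * exp (\<sigma> * v powr x))
         \<le> C * (1 / (1+u)^(\<nu>+1) + 1 / (1+v)^(\<nu>+1))"
    proof (rule ratio_lt1[OF x(1) True \<sigma> uv refl])
      fix t :: real assume "t \<ge> 0"
      thus "(1+t)^(\<nu>+1) \<le> C * exp ((1 - x) / 4 * t powr x)"
        using expbound[of "(1-x)/4" x t "\<nu>+1"] True x unfolding C_def by simp
    qed
    thus ?thesis using True unfolding wt_def u_def v_def w_def by simp
  next
    case False
    hence x1: "x = 1" using x by simp
    have "(1+w)^(\<nu>+1) * exp (\<sigma> * w) / ((1+u)^(\<nu>+1) * exp (\<sigma> * u) * ((1+v)^(\<nu>+1) * exp (\<sigma> * v)))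
         \<le> 2^(\<nu>+1) * (1 / (1+u)^(\<nu>+1) + 1 / (1+v)^(\<nu>+1))"
      using \<sigma> uv by (intro ratio_eq1) auto
    thus ?thesis using x1 unfolding wt_def u_def v_def w_def C_def by simp
  qed
  also have "\<dots> \<le> C * ((\<Prod>i<\<nu>. (1 + real_of_int \<bar>m i\<bar>) powr (- (real (\<nu>+1) / real \<nu>)))
               + (\<Prod>i<\<nu>. (1 + real_of_int \<bar>n i - m i\<bar>) powr (- (real (\<nu>+1) / real \<nu>))))"
    unfolding u_def v_def using C0 by (intro mult_left_mono add_mono q_le_G[OF nu])
  finally show ?thesis .
qed

theorem proposition17:
  fixes \<nu> :: nat and x :: real
  assumes "\<nu> \<ge> 1" and "0 < x" and "x \<le> 1"
  shows "1 \<le> Dconst \<nu> x \<and> Dconst \<nu> x < \<infinity>"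
proof
  define z :: "nat \<Rightarrow> int" where "z = (\<lambda>i. 0)"
  have zl: "z \<in> lattice \<nu>" by (simp add: z_def lattice_def)
  let ?f = "\<lambda>m. ennreal (wt \<nu> x (1/4) z / (wt \<nu> x (1/4) m * wt \<nu> x (1/4) (\<lambda>i. z i - m i)))"
  have wz: "wt \<nu> x (1/4) z = 1" by (simp add: wt_def z_def mnorm_zero)
  have "infsum ?f {z} \<le> infsum ?f (lattice \<nu>)"
    using zl by (intro infsum_mono_neutral) (auto intro: nonneg_summable_on_complete)
  moreover have "infsum ?f {z} = 1" using wz by (simp add: z_def)
  ultimately have "1 \<le> infsum ?f (lattice \<nu>)" by simp
  also have "\<dots> \<le> (SUP \<sigma> \<in> {1/4..}. infsum (\<lambda>m. ennreal (wt \<nu> x \<sigma> z / (wt \<nu> x \<sigma> m * wt \<nu> x \<sigma> (\<lambda>i. z i - m i)))) (lattice \<nu>))"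
    by (rule SUP_upper) auto
  also have "\<dots> \<le> Dconst \<nu> x"
    unfolding Dconst_def using zl by (rule SUP_upper)
  finally show "1 \<le> Dconst \<nu> x" .
next
  define p :: real where "p = real (\<nu>+1) / real \<nu>"
  have p1: "p > 1" using assms by (simp add: p_def field_simps)
  define h where "h k = (1 + real_of_int \<bar>k\<bar>) powr (-p)" for k :: int
  define T where "T = 2 * (\<Sum>j. real (Suc j) powr (-p))"
  define C where "C = (if x < 1 then 2^(\<nu>+1) * max 1 ((real (nat \<lceil>(\<nu>+1)/x\<rceil> + 1) / ((1-x)/4)) ^ (nat \<lceil>(\<nu>+1)/x\<rceil> + 1)) else (2::real)^(\<nu>+1))"
  have C0: "C \<ge> 0" unfolding C_def by auto
  define G where "G m = (\<Prod>i<\<nu>. h (m i))" for m :: "nat \<Rightarrow> int"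
  have G0: "G m \<ge> 0" for m unfolding G_def h_def by (auto intro: prod_nonneg)
  have hT: "(\<Sum>k\<in>{-K..K}. h k) \<le> T" for K
  proof -
    have "(\<Sum>k\<in>{-K..K}. (1 + real_of_int \<bar>k\<bar>) powr (-p)) \<le> 2 * (\<Sum>j. real (Suc j) powr (-p))"
      by (rule oned_bound[OF p1])
    thus ?thesis unfolding h_def T_def .
  qed
  have SG: "infsum (\<lambda>m. ennreal (G m)) (lattice \<nu>) \<le> ennreal (T ^ \<nu>)"
    unfolding G_def by (rule lattice_sum_bound[OF _ hT]) (simp add: h_def)
  have bd: "infsum (\<lambda>m. ennreal (wt \<nu> x \<sigma> n / (wt \<nu> x \<sigma> m * wt \<nu> x \<sigma> (\<lambda>i. n i - m i)))) (lattice \<nu>)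
            \<le> ennreal C * (ennreal (T ^ \<nu>) + ennreal (T ^ \<nu>))"
    if n: "n \<in> lattice \<nu>" and \<sigma>: "\<sigma> \<in> {1/4..}" for n \<sigma>
  proof -
    define d where "d m = (\<lambda>i. n i - m i)" for m :: "nat \<Rightarrow> int"
    have bij: "bij_betw d (lattice \<nu>) (lattice \<nu>)"
      by (rule bij_betw_byWitness[where f' = d]) (use n in \<open>auto simp: d_def lattice_def\<close>)
    have "infsum (\<lambda>m. ennreal (wt \<nu> x \<sigma> n / (wt \<nu> x \<sigma> m * wt \<nu> x \<sigma> (\<lambda>i. n i - m i)))) (lattice \<nu>)
          \<le> infsum (\<lambda>m. ennreal C * (ennreal (G m) + ennreal (G (d m)))) (lattice \<nu>)"
    proof (rule infsum_mono)
      fix m assume "m \<in> lattice \<nu>"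
      have "wt \<nu> x \<sigma> n / (wt \<nu> x \<sigma> m * wt \<nu> x \<sigma> (\<lambda>i. n i - m i)) \<le> C * (G m + G (d m))"
        using term_bound[OF assms(1) assms(2) assms(3), of \<sigma> n m] \<sigma>
        unfolding C_def G_def h_def d_def p_def by simp
      hence "ennreal (wt \<nu> x \<sigma> n / (wt \<nu> x \<sigma> m * wt \<nu> x \<sigma> (\<lambda>i. n i - m i))) \<le> ennreal (C * (G m + G (d m)))"
        by (rule ennreal_leI)
      also have "\<dots> = ennreal C * (ennreal (G m) + ennreal (G (d m)))"
        using C0 G0 by (simp add: ennreal_mult ennreal_plus)
      finally show "ennreal (wt \<nu> x \<sigma> n / (wt \<nu> x \<sigma> m * wt \<nu> x \<sigma> (\<lambda>i. n i - m i))) \<le> ennreal C * (ennreal (G m) + ennreal (G (d m)))" .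
    qed (auto intro: nonneg_summable_on_complete)
    also have "\<dots> \<le> ennreal C * infsum (\<lambda>m. ennreal (G m) + ennreal (G (d m))) (lattice \<nu>)"
      by (rule ennreal_infsum_cmult_le)
    also have "infsum (\<lambda>m. ennreal (G m) + ennreal (G (d m))) (lattice \<nu>) = infsum (\<lambda>m. ennreal (G m)) (lattice \<nu>) + infsum (\<lambda>m. ennreal (G (d m))) (lattice \<nu>)"
      by (rule infsum_add) (auto intro: nonneg_summable_on_complete)
    also have "infsum (\<lambda>m. ennreal (G (d m))) (lattice \<nu>) = infsum (\<lambda>m. ennreal (G m)) (lattice \<nu>)"
      by (rule infsum_reindex_bij_betw[OF bij])
    also have "ennreal C * (infsum (\<lambda>m. ennreal (G m)) (lattice \<nu>) + infsum (\<lambda>m. ennreal (G m)) (lattice \<nu>))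
               \<le> ennreal C * (ennreal (T ^ \<nu>) + ennreal (T ^ \<nu>))"
      using SG by (intro mult_left_mono add_mono) auto
    finally show ?thesis .
  qed
  have "Dconst \<nu> x \<le> ennreal C * (ennreal (T ^ \<nu>) + ennreal (T ^ \<nu>))"
    unfolding Dconst_def using bd by (intro SUP_least) auto
  also have "\<dots> < \<infinity>" by (simp add: ennreal_mult_less_top)
  finally show "Dconst \<nu> x < \<infinity>" .
qed

end
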